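(* Let $\mathcal{P}$, $\mathcal{Q}$ and $\mathcal{R}$ be orthogonal decompositions of the spaces $V_\Omega$, $V_{\Upsilon}$ and $V_{\Gamma}$, respectively, with $V_{\Upsilon} \leq V_\Omega$ and $V_{\Gamma} \leq V_\Omega$. If $\mathcal{Q}$ is structure balanced in relation to $\mathcal{P}$ with efficiency factors $\lambda_{\mathbf{PQ}}$, and $\mathcal{R}$ is structure balanced in relation to $\mathcal{P} \vartriangleright\mathcal{Q}$ with efficiency factors $\lambda_{\mathbf{P} \vartriangleright\mathbf{Q}, \mathbf{R}}$ and $\lambda_{\mathbf{P} \vdash\mathcal{Q}, \mathbf{R}}$, then: (a) $\mathcal{R}$ is structure balanced in relation to $\mathcal{P}$ with efficiency matrix $\Lambda_{\mathcal{PR}}$ whose entries are $\lambda_{\mathbf{P} \mathbf{R}} = \big( \lambda_{\mathbf{P} \vdash \mathcal{Q}, \mathbf{R}} + \sum_{\mathbf{Q} \in\mathcal{Q}}' \lambda_{\mathbf{P} \vartriangleright\mathbf{Q}, \mathbf{R}} \big)$; (b) the decomposition $(\mathcal{P} \vartriangleright\mathcal{Q}) \vartriangleright \mathcal{R}$ is \begin{eqnarray*} & & \{(\mathbf{P} \vartriangleright\mathbf{Q}) \vartriangleright\mathbf{R}\colon\mathbf{P} \in\mathcal{P}, \mathbf{Q} \in\mathcal{Q}, \mathbf{R} \in\mathcal{R}, \lambda_{\mathbf{PQ}} \neq0, \lambda_{\mathbf{P} \vartriangleright \mathbf{Q}, \mathbf{R}} \neq0 \} \\ &&\qquad{}\cup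 \{(\mathbf{P} \vartriangleright\mathbf{Q}) \vdash\mathcal{R}\colon\mathbf{P} \in\mathcal{P}, \mathbf{Q} \in\mathcal{Q}, \lambda_{\mathbf{PQ}} \neq0 \} \\ &&\qquad{}\cup \{(\mathbf{P} \vdash\mathcal{Q}) \vartriangleright\mathbf{R}\colon\mathbf{P} \in\mathcal{P}, \mathbf{R} \in\mathcal{R}, \lambda_{\mathbf{P} \vdash\mathcal{Q}, \mathbf{R}} \neq0 \} \\ &&\qquad{}\cup \{(\mathbf{P} \vdash\mathcal{Q}) \vdash\mathcal{R}\colon\mathbf{P} \in\mathcal{P} \}. \end{eqnarray*}
   Context: $\Omega$ is a finite set of observational units and $V_\Omega$ the space of real vectors indexed by $\Omega$; $\Upsilon$ and $\Gamma$ are further finite sets whose vector spaces are identified (via allocation functions $\Omega\to\Upsilon$, $\Omega\to\Gamma$) with subspaces $V_\Upsilon, V_\Gamma$ of $V_\Omega$. An orthogonal decomposition (structure) of a space is identified with the complete set of mutually orthogonal idempotent (projection) matrices onto its subspaces; all these are regarded as $\Omega\times\Omega$ matrices. For idempotents $\mathbf{P}$ and $\mathbf{Q}$, $\mathbf{Q}$ has first-order balance in relation to $\mathbf{P}$ if $\mathbf{QPQ}=\lambda_{\mathbf{PQ}}\mathbf{Q}$ for a scalar $\lambda_{\mathbf{PQ}}$ (the efficiency factor); if $\lambda_{\mathbf{PQ}}\neq 0$, $\mathbf{P}\vartriangleright\mathbf{Q}=\lambda_{\mathbf{PQ}}^{-1}\mathbf{PQP}$, the projector onto $\operatorname{Im}\mathbf{PQ}$.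 A structure $\mathcal{Q}$ is structure balanced in relation to a structure $\mathcal{P}$ if every element of $\mathcal{Q}$ has first-order balance in relation to every element of $\mathcal{P}$ and $\mathbf{Q}_1\mathbf{P}\mathbf{Q}_2=\mathbf{0}$ for all $\mathbf{P}\in\mathcal{P}$ and distinct $\mathbf{Q}_1,\mathbf{Q}_2\in\mathcal{Q}$. Then $\mathbf{P}\vdash\mathcal{Q}=\mathbf{P}-\sum'_{\mathbf{Q}\in\mathcal{Q}}\mathbf{P}\vartriangleright\mathbf{Q}$, where $\sum'_{\mathbf{Q}\in\mathcal{Q}}$ denotes summation over those $\mathbf{Q}$ with $\lambda_{\mathbf{PQ}}\neq0$; and the decomposition $\mathcal{P}\vartriangleright\mathcal{Q}$ of $V_\Omega$ consists of the (nonzero) idempotents $\mathbf{P}\vartriangleright\mathbf{Q}$ ($\lambda_{\mathbf{PQ}}\neq0$) and $\mathbf{P}\vdash\mathcal{Q}$ for $\mathbf{P}\in\mathcal{P}$, $\mathbf{Q}\in\mathcal{Q}$. The operations $\vartriangleright$ and $\vdash$ are applied in the same way to elements of $\mathcal{P}\vartriangleright\mathcal{Q}$ and $\mathcal{R}$; $\lambda_{\mathbf{P} \vartriangleright\mathbf{Q}, \mathbf{R}}$ and $\lambda_{\mathbf{P} \vdash\mathcal{Q}, \mathbf{R}}$ are the efficiency factors of $\mathbf{R}$ in relation to $\mathbf{P}\vartriangleright\mathbf{Q}$ and $\mathbf{P}\vdash\mathcal{Q}$. This is the setting of unrandomized-inclusive randomizations: $\Upsilon$ is randomized to $\Omega$,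 then $\Gamma$ is randomized to $\Omega$ taking account of the first randomization. *)

theory Defs
  imports "HOL-Analysis.Analysis"
begin

text \<open>Observational units Omega are modelled by a finite type 'n; Omega x Omega real
matrices are elements of real^'n^'n; V_Omega is the whole space real^'n.\<close>

definition orth_proj :: "real^'n^'n \<Rightarrow> bool" where
  "orth_proj M \<longleftrightarrow> M ** M = M \<and> transpose M = M"

definition orth_decomp :: "(real^'n^'n) set \<Rightarrow> (real^'n) set \<Rightarrow> bool" where
  "orth_decomp S V \<longleftrightarrow> subspace V \<and> finite S
     \<and> (\<forall>P\<in>S. orth_proj P \<and> P \<noteq> 0)
     \<and> (\<forall>P1\<in>S. \<forall>P2\<in>S. P1 \<noteq> P2 \<longrightarrow> P1 ** P2 = 0)
     \<and> (\<forall>x. (\<Sum>S) *v x \<in> V) \<and> (\<forall>x\<in>V. (\<Sum>S) *v x = x)"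

definition first_order_balance :: "real^'n^'n \<Rightarrow> real^'n^'n \<Rightarrow> bool" where
  "first_order_balance Q P \<longleftrightarrow> (\<exists>l. Q ** P ** Q = l *\<^sub>R Q)"

definition structure_balanced :: "(real^'n^'n) set \<Rightarrow> (real^'n^'n) set \<Rightarrow> bool" where
  "structure_balanced Qs Ps \<longleftrightarrow>
     (\<forall>Q\<in>Qs. \<forall>P\<in>Ps. first_order_balance Q P)
     \<and> (\<forall>P\<in>Ps. \<forall>Q1\<in>Qs. \<forall>Q2\<in>Qs. Q1 \<noteq> Q2 \<longrightarrow> Q1 ** P ** Q2 = 0)"

text \<open>Efficiency factor lambda_PQ of Q in relation to P (unique when Q is nonzero).\<close>
definition eff :: "real^'n^'n \<Rightarrow> real^'n^'n \<Rightarrow> real" where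
  "eff P Q = (THE l. Q ** P ** Q = l *\<^sub>R Q)"

definition tri :: "real^'n^'n \<Rightarrow> real^'n^'n \<Rightarrow> real^'n^'n" where
  "tri P Q = inverse (eff P Q) *\<^sub>R (P ** Q ** P)"

definition residual :: "real^'n^'n \<Rightarrow> (real^'n^'n) set \<Rightarrow> real^'n^'n" where
  "residual P Qs = P - (\<Sum>Q\<in>{Q\<in>Qs. eff P Q \<noteq> 0}. tri P Q)"

definition decomp :: "(real^'n^'n) set \<Rightarrow> (real^'n^'n) set \<Rightarrow> (real^'n^'n) set" where
  "decomp Ps Qs = ({tri P Q | P Q. P \<in> Ps \<and> Q \<in> Qs \<and> eff P Q \<noteq> 0}
                   \<union> {residual P Qs | P. P \<in> Ps}) - {0}"

end

theory Submission
  imports Defs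
begin

lemma mat_add_rdistrib: "((B + C) ** (A::real^'n^'n)) = (B ** A) + (C ** A)"
  by (vector matrix_matrix_mult_def sum.distrib[symmetric] field_simps)

lemma sandwich_add: "(R::real^'n^'n) ** (A + B) ** R = R ** A ** R + R ** B ** R"
  by (simp add: matrix_add_ldistrib mat_add_rdistrib)

lemma sandwich_sum:
  assumes "finite S"
  shows "(R::real^'n^'n) ** (\<Sum>i\<in>S. f i) ** R = (\<Sum>i\<in>S. R ** f i ** R)"
  using assms
proof (induction S rule: finite_induct)
  case empty then show ?case by simp
next
  case (insert x F) then show ?case by (simp add: sandwich_add)
qed

lemma eff_unique:
  assumes "(R::real^'n^'n) \<noteq> 0" "R ** X ** R = l *\<^sub>R R"
  shows "eff X R = l"
  unfolding eff_def
proof (rule the_equality)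
  show "R ** X ** R = l *\<^sub>R R" by fact
  fix m assume "R ** X ** R = m *\<^sub>R R"
  then have "m *\<^sub>R R = l *\<^sub>R R" using assms by simp
  then show "m = l" using assms(1) by (simp add: scaleR_cancel_right)
qed

lemma eff_zero:
  assumes "(R::real^'n^'n) \<noteq> 0"
  shows "eff 0 R = 0"
  using eff_unique[OF assms, of 0 0] by simp

theorem theorem1:
  fixes Ps Qs Rs :: "(real^'n^'n) set" and VU VG :: "(real^'n) set"
  assumes "orth_decomp Ps UNIV"
    and "orth_decomp Qs VU"
    and "orth_decomp Rs VG"
    and "structure_balanced Qs Ps"
    and "structure_balanced Rs (decomp Ps Qs)"
  shows "(structure_balanced Rs Ps
         \<and> (\<forall>P\<in>Ps. \<forall>R\<in>Rs. eff P R =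
               eff (residual P Qs) R + (\<Sum>Q\<in>{Q\<in>Qs. eff P Q \<noteq> 0}. eff (tri P Q) R)))
         \<and> decomp (decomp Ps Qs) Rs =
         ({tri (tri P Q) R | P Q R. P \<in> Ps \<and> Q \<in> Qs \<and> R \<in> Rs \<and> eff P Q \<noteq> 0
                                    \<and> eff (tri P Q) R \<noteq> 0}
          \<union> {residual (tri P Q) Rs | P Q. P \<in> Ps \<and> Q \<in> Qs \<and> eff P Q \<noteq> 0}
          \<union> {tri (residual P Qs) R | P R. P \<in> Ps \<and> R \<in> Rs \<and> eff (residual P Qs) R \<noteq> 0}
          \<union> {residual (residual P Qs) Rs | P. P \<in> Ps}) - {0}"
proof -
  have Rnz: "\<And>R. R \<in> Rs \<Longrightarrow> R \<noteq> 0" using assms(3) unfolding orth_decomp_def by blast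
  have finQ: "finite Qs" using assms(2) unfolding orth_decomp_def by blast
  have finR: "finite Rs" using assms(3) unfolding orth_decomp_def by blast
  define D where "D = decomp Ps Qs"
  have inD: "X \<in> D \<or> X = 0" if "X = tri P Q \<or> X = residual P Qs" "P \<in> Ps" "Q \<in> Qs" "eff P Q \<noteq> 0 \<or> X = residual P Qs" for X P Q
    using that unfolding D_def decomp_def by blast
  have inD2: "residual P Qs \<in> D \<or> residual P Qs = 0" if "P \<in> Ps" for P
    using that unfolding D_def decomp_def by blast
  have inD3: "tri P Q \<in> D \<or> tri P Q = 0" if "P \<in> Ps" "Q \<in> Qs" "eff P Q \<noteq> 0" for P Q
    using that unfolding D_def decomp_def by blast
  have sb: "structure_balanced Rs D" using assms(5) D_def by simp
  have sand: "R ** X ** R = eff X R *\<^sub>R R" if hX: "X \<in> D \<or> X = 0" and hR: "R \<in> Rs" for X R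
  proof (cases "X = 0")
    case True then show ?thesis using eff_zero[OF Rnz[OF hR]] by simp
  next
    case False
    then have "X \<in> D" using hX by blast
    then obtain l where l: "R ** X ** R = l *\<^sub>R R"
      using sb hR unfolding structure_balanced_def first_order_balance_def by blast
    then show ?thesis using eff_unique[OF Rnz[OF hR] l] by simp
  qed
  have orth: "R1 ** X ** R2 = 0" if "X \<in> D \<or> X = 0" "R1 \<in> Rs" "R2 \<in> Rs" "R1 \<noteq> R2" for X R1 R2
    using that sb unfolding structure_balanced_def by auto
  have decP: "P = residual P Qs + (\<Sum>Q\<in>{Q\<in>Qs. eff P Q \<noteq> 0}. tri P Q)" for P
    unfolding residual_def by simp
  have finS: "finite {Q\<in>Qs. eff P Q \<noteq> 0}" for P using finQ by simp
  have A: "R ** P ** R = (eff (residual P Qs) R + (\<Sum>Q\<in>{Q\<in>Qs. eff P Q \<noteq> 0}. eff (tri P Q) R)) *\<^sub>R R"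
    if "P \<in> Ps" "R \<in> Rs" for P R
  proof -
    have "R ** P ** R = R ** residual P Qs ** R + (\<Sum>Q\<in>{Q\<in>Qs. eff P Q \<noteq> 0}. R ** tri P Q ** R)"
      by (subst decP, simp only: sandwich_add sandwich_sum[OF finS])
    also have "\<dots> = eff (residual P Qs) R *\<^sub>R R + (\<Sum>Q\<in>{Q\<in>Qs. eff P Q \<noteq> 0}. eff (tri P Q) R *\<^sub>R R)"
      using sand inD2 inD3 that by (intro arg_cong2[where f="(+)"] sum.cong) auto
    finally show ?thesis by (simp add: scaleR_add_left scaleR_sum_left)
  qed
  have O: "R1 ** P ** R2 = 0" if "P \<in> Ps" "R1 \<in> Rs" "R2 \<in> Rs" "R1 \<noteq> R2" for P R1 R2
  proof -
    have "R1 ** P ** R2 = R1 ** residual P Qs ** R2 + (\<Sum>Q\<in>{Q\<in>Qs. eff P Q \<noteq> 0}. R1 ** tri P Q ** R2)"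
    proof -
      have g: "R1 ** (\<Sum>i\<in>S. f i) ** R2 = (\<Sum>i\<in>S. R1 ** f i ** R2)" if "finite S" for S and f :: "real^'n^'n \<Rightarrow> real^'n^'n"
        using that by (induction S rule: finite_induct) (simp_all add: matrix_add_ldistrib mat_add_rdistrib)
      show ?thesis by (subst decP, simp only: matrix_add_ldistrib mat_add_rdistrib g[OF finS])
    qed
    also have "\<dots> = 0"
      using orth inD2 inD3 that by simp
    finally show ?thesis .
  qed
  have partA: "structure_balanced Rs Ps"
    unfolding structure_balanced_def first_order_balance_def using A O by blast
  have partA2: "\<forall>P\<in>Ps. \<forall>R\<in>Rs. eff P R =
               eff (residual P Qs) R + (\<Sum>Q\<in>{Q\<in>Qs. eff P Q \<noteq> 0}. eff (tri P Q) R)"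
    using A Rnz eff_unique by blast
  have res0: "residual 0 Rs = 0"
  proof -
    have "{Q \<in> Rs. eff 0 Q \<noteq> 0} = {}" using eff_zero Rnz by blast
    then show ?thesis unfolding residual_def by (simp only: sum.empty diff_zero)
  qed
  have partB: "decomp D Rs = ({tri (tri P Q) R | P Q R. P \<in> Ps \<and> Q \<in> Qs \<and> R \<in> Rs \<and> eff P Q \<noteq> 0
                                    \<and> eff (tri P Q) R \<noteq> 0}
          \<union> {residual (tri P Q) Rs | P Q. P \<in> Ps \<and> Q \<in> Qs \<and> eff P Q \<noteq> 0}
          \<union> {tri (residual P Qs) R | P R. P \<in> Ps \<and> R \<in> Rs \<and> eff (residual P Qs) R \<noteq> 0}
          \<union> {residual (residual P Qs) Rs | P. P \<in> Ps}) - {0}"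
    (is "?L = ?R")
  proof
    show "?L \<subseteq> ?R"
      unfolding decomp_def D_def by blast
  next
    show "?R \<subseteq> ?L"
    proof
      fix Y assume Y: "Y \<in> ?R"
      then have Ynz: "Y \<noteq> 0" by blast
      from Y show "Y \<in> ?L"
      proof (elim DiffE UnE CollectE exE conjE)
        fix P Q R assume h: "Y = tri (tri P Q) R" "P \<in> Ps" "Q \<in> Qs" "R \<in> Rs" "eff P Q \<noteq> 0" "eff (tri P Q) R \<noteq> 0"
        then have "tri P Q \<noteq> 0" using eff_zero[OF Rnz[OF h(4)]] by metis
        then have "tri P Q \<in> D" using inD3 h by blast
        then show "Y \<in> ?L" using h Ynz unfolding decomp_def by blast
      next
        fix P Q assume h: "Y = residual (tri P Q) Rs" "P \<in> Ps" "Q \<in> Qs" "eff P Q \<noteq> 0"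
        then have "tri P Q \<noteq> 0" using res0 Ynz by auto
        then have "tri P Q \<in> D" using inD3 h by blast
        then show "Y \<in> ?L" using h Ynz unfolding decomp_def by blast
      next
        fix P R assume h: "Y = tri (residual P Qs) R" "P \<in> Ps" "R \<in> Rs" "eff (residual P Qs) R \<noteq> 0"
        then have "residual P Qs \<noteq> 0" using eff_zero[OF Rnz[OF h(3)]] by metis
        then have "residual P Qs \<in> D" using inD2 h by blast
        then show "Y \<in> ?L" using h Ynz unfolding decomp_def by blast
      next
        fix P assume h: "Y = residual (residual P Qs) Rs" "P \<in> Ps"
        then have "residual P Qs \<noteq> 0" using res0 Ynz by auto
        then have "residual P Qs \<in> D" using inD2 h by blast
        then show "Y \<in> ?L" using h Ynz unfolding decomp_def by blast
      qed
    qed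
  qed
  show ?thesis using partA partA2 partB D_def by simp
qed

end
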